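(* Let $h_6$ be the real two-photon Lie algebra. A Lie bialgebra structure $\delta$ on $h_6$ satisfies $\delta(A_+)=0$ if and only if there exist real numbers $a_1,a_3,a_4,a_5,b_3,c_1$ with $$a_1a_4+a_5c_1=0$$ such that $\delta(X)=[1\otimes X+X\otimes 1,\,r]$ for all $X\in h_6$, where $$r=a_1\,N\wedge A_++a_3\,A_+\wedge M+a_4\,B_+\wedge M+a_5\,A_+\wedge B_++b_3\,A_-\wedge M+c_1\,(N\wedge M-A_+\wedge A_-).$$ Explicitly, $\delta(A_+)=\delta(M)=0$ and $\delta(N)=a_1N\wedge A_++a_3A_+\wedge M+2a_4B_+\wedge M+3a_5A_+\wedge B_+-b_3A_-\wedge M$, $\delta(A_-)=a_1(N\wedge M-A_+\wedge A_-)+2a_4A_+\wedge M-a_5B_+\wedge M+2c_1A_-\wedge M$, $\delta(B_+)=2a_1A_+\wedge B_+-2b_3A_+\wedge M-2c_1B_+\wedge M$, $\delta(B_-)=2a_1(N\wedge A_--A_+\wedge B_-)+2a_3A_-\wedge M+4a_4N\wedge M-2a_5(2N\wedge A_+-A_-\wedge B_+-A_+\wedge M)+2c_1B_-\wedge M$. Moreover, $r$ satisfies the classical Yang–Baxter equation $[[r,r]]=0$ (non-standard case) if and only if $a_1b_3-c_1^2=0$, and otherwise it is standard.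
   Context: The two-photon Lie algebra $h_6$ is the real Lie algebra with basis $\{N,A_+,A_-,B_+,B_-,M\}$ and brackets $[N,A_+]=A_+$, $[N,A_-]=-A_-$, $[A_-,A_+]=M$, $[N,B_+]=2B_+$, $[N,B_-]=-2B_-$, $[B_-,B_+]=4N+2M$, $[A_+,B_-]=-2A_-$, $[A_+,B_+]=0$, $[A_-,B_+]=2A_+$, $[A_-,B_-]=0$, and $M$ central. A Lie bialgebra structure on a Lie algebra $g$ is a linear map $\delta:g\to g\otimes g$ which is a 1-cocycle, i.e. $\delta([X,Y])=[\delta(X),1\otimes Y+Y\otimes 1]+[1\otimes X+X\otimes 1,\delta(Y)]$, and whose dual map $g^*\otimes g^*\to g^*$ is a Lie bracket. For $r=\sum r^{ij}X_i\otimes X_j\in g\wedge g$, the Schouten bracket is $[[r,r]]=[r_{12},r_{13}]+[r_{12},r_{23}]+[r_{13},r_{23}]$ with $r_{12}=\sum r^{ij}X_i\otimes X_j\otimes 1$, $r_{13}=\sum r^{ij}X_i\otimes 1\otimes X_j$, $r_{23}=\sum r^{ij}1\otimes X_i\otimes X_j$. Here $X\wedge Y=X\otimes Y-Y\otimes X$. *)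

theory Defs
  imports Complex_Main
begin

text \<open>The two-photon Lie algebra h6 over the reals, in coordinates with respect to
  the basis N, A+, A-, B+, B-, M.\<close>

datatype basis = N | Ap | Am | Bp | Bm | M

type_synonym vec = "basis \<Rightarrow> real"
type_synonym tens2 = "basis \<Rightarrow> basis \<Rightarrow> real"
type_synonym tens3 = "basis \<Rightarrow> basis \<Rightarrow> basis \<Rightarrow> real"

lemma UNIV_basis: "(UNIV :: basis set) = {N, Ap, Am, Bp, Bm, M}"
  using basis.exhaust by auto

instance basis :: finite
  by standard (simp add: UNIV_basis)

definition ev :: "basis \<Rightarrow> vec" where
  "ev b = (\<lambda>k. if k = b then 1 else 0)"

text \<open>The listed brackets [X,Y] of basis elements (one orientation each).\<close>
fun pos :: "basis \<Rightarrow> basis \<Rightarrow> vec" where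
  "pos N Ap = ev Ap"
| "pos N Am = (\<lambda>k. - ev Am k)"
| "pos Am Ap = ev M"
| "pos N Bp = (\<lambda>k. 2 * ev Bp k)"
| "pos N Bm = (\<lambda>k. -2 * ev Bm k)"
| "pos Bm Bp = (\<lambda>k. 4 * ev N k + 2 * ev M k)"
| "pos Ap Bm = (\<lambda>k. -2 * ev Am k)"
| "pos Am Bp = (\<lambda>k. 2 * ev Ap k)"
| "pos _ _ = (\<lambda>k. 0)"

definition sc :: "basis \<Rightarrow> basis \<Rightarrow> basis \<Rightarrow> real" where
  "sc a b k = pos a b k - pos b a k"

definition lie :: "vec \<Rightarrow> vec \<Rightarrow> vec" where
  "lie x y = (\<lambda>k. \<Sum>a\<in>UNIV. \<Sum>b\<in>UNIV. x a * y b * sc a b k)"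

definition wedge :: "vec \<Rightarrow> vec \<Rightarrow> tens2" where
  "wedge x y = (\<lambda>i j. x i * y j - y i * x j)"

text \<open>[1 \<otimes> X + X \<otimes> 1, t] for t in g \<otimes> g (adjoint action).\<close>
definition ad2 :: "vec \<Rightarrow> tens2 \<Rightarrow> tens2" where
  "ad2 x t = (\<lambda>i j. (\<Sum>k\<in>UNIV. t k j * lie x (ev k) i) + (\<Sum>l\<in>UNIV. t i l * lie x (ev l) j))"

definition ad3 :: "vec \<Rightarrow> tens3 \<Rightarrow> tens3" where
  "ad3 x t = (\<lambda>i j k. (\<Sum>a\<in>UNIV. t a j k * lie x (ev a) i) + (\<Sum>a\<in>UNIV. t i a k * lie x (ev a) j)
                     + (\<Sum>a\<in>UNIV. t i j a * lie x (ev a) k))"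

text \<open>Schouten bracket [[r,r]] = [r12,r13] + [r12,r23] + [r13,r23].\<close>
definition schouten :: "tens2 \<Rightarrow> tens3" where
  "schouten r = (\<lambda>i j k.
      (\<Sum>a\<in>UNIV. \<Sum>c\<in>UNIV. r a j * r c k * sc a c i)
    + (\<Sum>b\<in>UNIV. \<Sum>c\<in>UNIV. r i b * r c k * sc b c j)
    + (\<Sum>b\<in>UNIV. \<Sum>d\<in>UNIV. r i b * r j d * sc b d k))"

definition lin2 :: "(vec \<Rightarrow> tens2) \<Rightarrow> bool" where
  "lin2 \<delta> \<longleftrightarrow> (\<forall>x y. \<delta> (\<lambda>k. x k + y k) = (\<lambda>i j. \<delta> x i j + \<delta> y i j))
             \<and> (\<forall>c x. \<delta> (\<lambda>k. c * x k) = (\<lambda>i j. c * \<delta> x i j))"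

text \<open>1-cocycle condition:
  \<delta>([X,Y]) = [\<delta>(X), 1\<otimes>Y + Y\<otimes>1] + [1\<otimes>X + X\<otimes>1, \<delta>(Y)].\<close>
definition cocycle :: "(vec \<Rightarrow> tens2) \<Rightarrow> bool" where
  "cocycle \<delta> \<longleftrightarrow> (\<forall>x y. \<delta> (lie x y) = (\<lambda>i j. - ad2 y (\<delta> x) i j + ad2 x (\<delta> y) i j))"

text \<open>The dual map g* \<otimes> g* \<rightarrow> g*, (\<xi>,\<eta>) \<mapsto> (\<xi> \<otimes> \<eta>) \<circ> \<delta>, in coordinates w.r.t. the dual basis.\<close>
definition dual_br :: "(vec \<Rightarrow> tens2) \<Rightarrow> vec \<Rightarrow> vec \<Rightarrow> vec" where
  "dual_br \<delta> \<xi> \<eta> = (\<lambda>k. \<Sum>i\<in>UNIV. \<Sum>j\<in>UNIV. \<xi> i * \<eta> j * \<delta> (ev k) i j)"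

definition dual_is_lie :: "(vec \<Rightarrow> tens2) \<Rightarrow> bool" where
  "dual_is_lie \<delta> \<longleftrightarrow>
     (\<forall>\<xi>. dual_br \<delta> \<xi> \<xi> = (\<lambda>k. 0))
   \<and> (\<forall>\<xi> \<eta> \<zeta>. (\<lambda>k. dual_br \<delta> \<xi> (dual_br \<delta> \<eta> \<zeta>) k + dual_br \<delta> \<eta> (dual_br \<delta> \<zeta> \<xi>) k
                    + dual_br \<delta> \<zeta> (dual_br \<delta> \<xi> \<eta>) k) = (\<lambda>k. 0))"

definition lie_bialgebra :: "(vec \<Rightarrow> tens2) \<Rightarrow> bool" where
  "lie_bialgebra \<delta> \<longleftrightarrow> lin2 \<delta> \<and> cocycle \<delta> \<and> dual_is_lie \<delta>"

definition tadd :: "tens2 \<Rightarrow> tens2 \<Rightarrow> tens2" (infixl "\<oplus>\<^sub>t" 65) where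
  "tadd s t = (\<lambda>i j. s i j + t i j)"
definition tsub :: "tens2 \<Rightarrow> tens2 \<Rightarrow> tens2" (infixl "\<ominus>\<^sub>t" 65) where
  "tsub s t = (\<lambda>i j. s i j - t i j)"
definition tsc :: "real \<Rightarrow> tens2 \<Rightarrow> tens2" (infixr "\<cdot>\<^sub>t" 75) where
  "tsc c t = (\<lambda>i j. c * t i j)"

definition rmat :: "real \<Rightarrow> real \<Rightarrow> real \<Rightarrow> real \<Rightarrow> real \<Rightarrow> real \<Rightarrow> tens2" where
  "rmat a1 a3 a4 a5 b3 c1 =
      a1 \<cdot>\<^sub>t wedge (ev N) (ev Ap) \<oplus>\<^sub>t a3 \<cdot>\<^sub>t wedge (ev Ap) (ev M) \<oplus>\<^sub>t a4 \<cdot>\<^sub>t wedge (ev Bp) (ev M)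
   \<oplus>\<^sub>t a5 \<cdot>\<^sub>t wedge (ev Ap) (ev Bp) \<oplus>\<^sub>t b3 \<cdot>\<^sub>t wedge (ev Am) (ev M)
   \<oplus>\<^sub>t c1 \<cdot>\<^sub>t (wedge (ev N) (ev M) \<ominus>\<^sub>t wedge (ev Ap) (ev Am))"

end

theory Submission
  imports Defs
begin

lemma sum_UNIV_b: "(\<Sum>x\<in>UNIV. f x) = f N + f Ap + f Am + f Bp + f Bm + f M"
  by (simp add: UNIV_basis add.assoc)

lemma all_b: "(\<forall>x::basis. P x) \<longleftrightarrow> P N \<and> P Ap \<and> P Am \<and> P Bp \<and> P Bm \<and> P M"
  by (metis basis.exhaust)

lemma ev_simps: "ev a b = (if b = a then 1 else 0)"
  by (simp add: ev_def)

lemma m3: "(if P then y else 0) * (x::real) = (if P then y*x else 0)" by simp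
lemma m4: "(x::real) * (if P then y else 0) = (if P then x*y else 0)" by simp

lemma lie_ev: "lie x (ev b) i = (\<Sum>a\<in>UNIV. x a * sc a b i)"
  unfolding lie_def ev_def by (simp add: m3 m4)

lemma lie_ev_ev: "lie (ev a) (ev b) i = sc a b i"
  unfolding lie_ev by (simp add: ev_def m3 m4)

lemma ad2_ev: "ad2 (ev a) t i j = (\<Sum>k\<in>UNIV. t k j * sc a k i) + (\<Sum>l\<in>UNIV. t i l * sc a l j)"
  unfolding ad2_def by (simp add: lie_ev_ev)

lemmas sc_eval = sc_def pos.simps

lemma fun2_eq: "(s::tens2) = t \<longleftrightarrow> (\<forall>i j. s i j = t i j)"
  by (auto simp: fun_eq_iff)
lemma fun3_eq: "(s::tens3) = t \<longleftrightarrow> (\<forall>i j k. s i j k = t i j k)"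
  by (auto simp: fun_eq_iff)


lemma ad2_Ap: "ad2 (ev Ap) (rmat a1 a3 a4 a5 b3 c1) = (\<lambda>i j. 0)"
  unfolding fun2_eq all_b ad2_ev sum_UNIV_b
  by (simp add: sc_eval ev_simps rmat_def tadd_def tsub_def tsc_def wedge_def)

definition alt3 :: "basis \<Rightarrow> basis \<Rightarrow> basis \<Rightarrow> tens3" where
  "alt3 x y z = (\<lambda>i j k. ev x i * ev y j * ev z k - ev x i * ev z j * ev y k - ev y i * ev x j * ev z k
      + ev y i * ev z j * ev x k + ev z i * ev x j * ev y k - ev z i * ev y j * ev x k)"

lemmas rdefs = rmat_def tadd_def tsub_def tsc_def wedge_def

lemma bsum: "(\<Sum>a\<in>UNIV. \<Sum>c\<in>UNIV. g a c * sc a c k) =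
   (g N Ap - g Ap N) * ev Ap k - (g N Am - g Am N) * ev Am k + (g Am Ap - g Ap Am) * ev M k
 + 2*(g N Bp - g Bp N) * ev Bp k - 2*(g N Bm - g Bm N)*ev Bm k + (g Bm Bp - g Bp Bm)*(4*ev N k + 2*ev M k)
 - 2*(g Ap Bm - g Bm Ap) * ev Am k + 2*(g Am Bp - g Bp Am) * ev Ap k"
  unfolding sum_UNIV_b sc_def by (simp add: algebra_simps)

lemma rtab[simp]:
  "rmat a1 a3 a4 a5 b3 c1 N N = 0"
  "rmat a1 a3 a4 a5 b3 c1 N Ap = a1"
  "rmat a1 a3 a4 a5 b3 c1 N Am = 0"
  "rmat a1 a3 a4 a5 b3 c1 N Bp = 0"
  "rmat a1 a3 a4 a5 b3 c1 N Bm = 0"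
  "rmat a1 a3 a4 a5 b3 c1 N M = c1"
  "rmat a1 a3 a4 a5 b3 c1 Ap N = - a1"
  "rmat a1 a3 a4 a5 b3 c1 Ap Ap = 0"
  "rmat a1 a3 a4 a5 b3 c1 Ap Am = - c1"
  "rmat a1 a3 a4 a5 b3 c1 Ap Bp = a5"
  "rmat a1 a3 a4 a5 b3 c1 Ap Bm = 0"
  "rmat a1 a3 a4 a5 b3 c1 Ap M = a3"
  "rmat a1 a3 a4 a5 b3 c1 Am N = 0"
  "rmat a1 a3 a4 a5 b3 c1 Am Ap = c1"
  "rmat a1 a3 a4 a5 b3 c1 Am Am = 0"
  "rmat a1 a3 a4 a5 b3 c1 Am Bp = 0"
  "rmat a1 a3 a4 a5 b3 c1 Am Bm = 0"
  "rmat a1 a3 a4 a5 b3 c1 Am M = b3"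
  "rmat a1 a3 a4 a5 b3 c1 Bp N = 0"
  "rmat a1 a3 a4 a5 b3 c1 Bp Ap = - a5"
  "rmat a1 a3 a4 a5 b3 c1 Bp Am = 0"
  "rmat a1 a3 a4 a5 b3 c1 Bp Bp = 0"
  "rmat a1 a3 a4 a5 b3 c1 Bp Bm = 0"
  "rmat a1 a3 a4 a5 b3 c1 Bp M = a4"
  "rmat a1 a3 a4 a5 b3 c1 Bm N = 0"
  "rmat a1 a3 a4 a5 b3 c1 Bm Ap = 0"
  "rmat a1 a3 a4 a5 b3 c1 Bm Am = 0"
  "rmat a1 a3 a4 a5 b3 c1 Bm Bp = 0"
  "rmat a1 a3 a4 a5 b3 c1 Bm Bm = 0"
  "rmat a1 a3 a4 a5 b3 c1 Bm M = 0"
  "rmat a1 a3 a4 a5 b3 c1 M N = - c1"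
  "rmat a1 a3 a4 a5 b3 c1 M Ap = - a3"
  "rmat a1 a3 a4 a5 b3 c1 M Am = - b3"
  "rmat a1 a3 a4 a5 b3 c1 M Bp = - a4"
  "rmat a1 a3 a4 a5 b3 c1 M Bm = 0"
  "rmat a1 a3 a4 a5 b3 c1 M M = 0"
  by (simp_all add: rdefs ev_simps)

lemma schouten_r: "schouten (rmat a1 a3 a4 a5 b3 c1) i j k =
   (a1*b3 - c1^2) * alt3 Ap Am M i j k - 2 * (a1*a4+a5*c1) * alt3 Ap Bp M i j k"
  unfolding schouten_def bsum
  by (cases i; cases j; cases k; simp add: ev_simps alt3_def power2_eq_square algebra_simps)

lemma ad2tab[simp]:
  "ad2 (ev N) (rmat a1 a3 a4 a5 b3 c1) N N = 0"
  "ad2 (ev N) (rmat a1 a3 a4 a5 b3 c1) N Ap = a1"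
  "ad2 (ev N) (rmat a1 a3 a4 a5 b3 c1) N Am = 0"
  "ad2 (ev N) (rmat a1 a3 a4 a5 b3 c1) N Bp = 0"
  "ad2 (ev N) (rmat a1 a3 a4 a5 b3 c1) N Bm = 0"
  "ad2 (ev N) (rmat a1 a3 a4 a5 b3 c1) N M = 0"
  "ad2 (ev N) (rmat a1 a3 a4 a5 b3 c1) Ap N = - a1"
  "ad2 (ev N) (rmat a1 a3 a4 a5 b3 c1) Ap Ap = 0"
  "ad2 (ev N) (rmat a1 a3 a4 a5 b3 c1) Ap Am = 0"
  "ad2 (ev N) (rmat a1 a3 a4 a5 b3 c1) Ap Bp = 3 * a5"
  "ad2 (ev N) (rmat a1 a3 a4 a5 b3 c1) Ap Bm = 0"
  "ad2 (ev N) (rmat a1 a3 a4 a5 b3 c1) Ap M = a3"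
  "ad2 (ev N) (rmat a1 a3 a4 a5 b3 c1) Am N = 0"
  "ad2 (ev N) (rmat a1 a3 a4 a5 b3 c1) Am Ap = 0"
  "ad2 (ev N) (rmat a1 a3 a4 a5 b3 c1) Am Am = 0"
  "ad2 (ev N) (rmat a1 a3 a4 a5 b3 c1) Am Bp = 0"
  "ad2 (ev N) (rmat a1 a3 a4 a5 b3 c1) Am Bm = 0"
  "ad2 (ev N) (rmat a1 a3 a4 a5 b3 c1) Am M = - b3"
  "ad2 (ev N) (rmat a1 a3 a4 a5 b3 c1) Bp N = 0"
  "ad2 (ev N) (rmat a1 a3 a4 a5 b3 c1) Bp Ap = - 3 * a5"
  "ad2 (ev N) (rmat a1 a3 a4 a5 b3 c1) Bp Am = 0"
  "ad2 (ev N) (rmat a1 a3 a4 a5 b3 c1) Bp Bp = 0"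
  "ad2 (ev N) (rmat a1 a3 a4 a5 b3 c1) Bp Bm = 0"
  "ad2 (ev N) (rmat a1 a3 a4 a5 b3 c1) Bp M = 2 * a4"
  "ad2 (ev N) (rmat a1 a3 a4 a5 b3 c1) Bm N = 0"
  "ad2 (ev N) (rmat a1 a3 a4 a5 b3 c1) Bm Ap = 0"
  "ad2 (ev N) (rmat a1 a3 a4 a5 b3 c1) Bm Am = 0"
  "ad2 (ev N) (rmat a1 a3 a4 a5 b3 c1) Bm Bp = 0"
  "ad2 (ev N) (rmat a1 a3 a4 a5 b3 c1) Bm Bm = 0"
  "ad2 (ev N) (rmat a1 a3 a4 a5 b3 c1) Bm M = 0"
  "ad2 (ev N) (rmat a1 a3 a4 a5 b3 c1) M N = 0"
  "ad2 (ev N) (rmat a1 a3 a4 a5 b3 c1) M Ap = - a3"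
  "ad2 (ev N) (rmat a1 a3 a4 a5 b3 c1) M Am = b3"
  "ad2 (ev N) (rmat a1 a3 a4 a5 b3 c1) M Bp = - 2 * a4"
  "ad2 (ev N) (rmat a1 a3 a4 a5 b3 c1) M Bm = 0"
  "ad2 (ev N) (rmat a1 a3 a4 a5 b3 c1) M M = 0"
  "ad2 (ev Ap) (rmat a1 a3 a4 a5 b3 c1) N N = 0"
  "ad2 (ev Ap) (rmat a1 a3 a4 a5 b3 c1) N Ap = 0"
  "ad2 (ev Ap) (rmat a1 a3 a4 a5 b3 c1) N Am = 0"
  "ad2 (ev Ap) (rmat a1 a3 a4 a5 b3 c1) N Bp = 0"
  "ad2 (ev Ap) (rmat a1 a3 a4 a5 b3 c1) N Bm = 0"
  "ad2 (ev Ap) (rmat a1 a3 a4 a5 b3 c1) N M = 0"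
  "ad2 (ev Ap) (rmat a1 a3 a4 a5 b3 c1) Ap N = 0"
  "ad2 (ev Ap) (rmat a1 a3 a4 a5 b3 c1) Ap Ap = 0"
  "ad2 (ev Ap) (rmat a1 a3 a4 a5 b3 c1) Ap Am = 0"
  "ad2 (ev Ap) (rmat a1 a3 a4 a5 b3 c1) Ap Bp = 0"
  "ad2 (ev Ap) (rmat a1 a3 a4 a5 b3 c1) Ap Bm = 0"
  "ad2 (ev Ap) (rmat a1 a3 a4 a5 b3 c1) Ap M = 0"
  "ad2 (ev Ap) (rmat a1 a3 a4 a5 b3 c1) Am N = 0"
  "ad2 (ev Ap) (rmat a1 a3 a4 a5 b3 c1) Am Ap = 0"
  "ad2 (ev Ap) (rmat a1 a3 a4 a5 b3 c1) Am Am = 0"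
  "ad2 (ev Ap) (rmat a1 a3 a4 a5 b3 c1) Am Bp = 0"
  "ad2 (ev Ap) (rmat a1 a3 a4 a5 b3 c1) Am Bm = 0"
  "ad2 (ev Ap) (rmat a1 a3 a4 a5 b3 c1) Am M = 0"
  "ad2 (ev Ap) (rmat a1 a3 a4 a5 b3 c1) Bp N = 0"
  "ad2 (ev Ap) (rmat a1 a3 a4 a5 b3 c1) Bp Ap = 0"
  "ad2 (ev Ap) (rmat a1 a3 a4 a5 b3 c1) Bp Am = 0"
  "ad2 (ev Ap) (rmat a1 a3 a4 a5 b3 c1) Bp Bp = 0"
  "ad2 (ev Ap) (rmat a1 a3 a4 a5 b3 c1) Bp Bm = 0"
  "ad2 (ev Ap) (rmat a1 a3 a4 a5 b3 c1) Bp M = 0"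
  "ad2 (ev Ap) (rmat a1 a3 a4 a5 b3 c1) Bm N = 0"
  "ad2 (ev Ap) (rmat a1 a3 a4 a5 b3 c1) Bm Ap = 0"
  "ad2 (ev Ap) (rmat a1 a3 a4 a5 b3 c1) Bm Am = 0"
  "ad2 (ev Ap) (rmat a1 a3 a4 a5 b3 c1) Bm Bp = 0"
  "ad2 (ev Ap) (rmat a1 a3 a4 a5 b3 c1) Bm Bm = 0"
  "ad2 (ev Ap) (rmat a1 a3 a4 a5 b3 c1) Bm M = 0"
  "ad2 (ev Ap) (rmat a1 a3 a4 a5 b3 c1) M N = 0"
  "ad2 (ev Ap) (rmat a1 a3 a4 a5 b3 c1) M Ap = 0"
  "ad2 (ev Ap) (rmat a1 a3 a4 a5 b3 c1) M Am = 0"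
  "ad2 (ev Ap) (rmat a1 a3 a4 a5 b3 c1) M Bp = 0"
  "ad2 (ev Ap) (rmat a1 a3 a4 a5 b3 c1) M Bm = 0"
  "ad2 (ev Ap) (rmat a1 a3 a4 a5 b3 c1) M M = 0"
  "ad2 (ev Am) (rmat a1 a3 a4 a5 b3 c1) N N = 0"
  "ad2 (ev Am) (rmat a1 a3 a4 a5 b3 c1) N Ap = 0"
  "ad2 (ev Am) (rmat a1 a3 a4 a5 b3 c1) N Am = 0"
  "ad2 (ev Am) (rmat a1 a3 a4 a5 b3 c1) N Bp = 0"
  "ad2 (ev Am) (rmat a1 a3 a4 a5 b3 c1) N Bm = 0"
  "ad2 (ev Am) (rmat a1 a3 a4 a5 b3 c1) N M = a1"
  "ad2 (ev Am) (rmat a1 a3 a4 a5 b3 c1) Ap N = 0"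
  "ad2 (ev Am) (rmat a1 a3 a4 a5 b3 c1) Ap Ap = 0"
  "ad2 (ev Am) (rmat a1 a3 a4 a5 b3 c1) Ap Am = - a1"
  "ad2 (ev Am) (rmat a1 a3 a4 a5 b3 c1) Ap Bp = 0"
  "ad2 (ev Am) (rmat a1 a3 a4 a5 b3 c1) Ap Bm = 0"
  "ad2 (ev Am) (rmat a1 a3 a4 a5 b3 c1) Ap M = 2 * a4"
  "ad2 (ev Am) (rmat a1 a3 a4 a5 b3 c1) Am N = 0"
  "ad2 (ev Am) (rmat a1 a3 a4 a5 b3 c1) Am Ap = a1"
  "ad2 (ev Am) (rmat a1 a3 a4 a5 b3 c1) Am Am = 0"
  "ad2 (ev Am) (rmat a1 a3 a4 a5 b3 c1) Am Bp = 0"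
  "ad2 (ev Am) (rmat a1 a3 a4 a5 b3 c1) Am Bm = 0"
  "ad2 (ev Am) (rmat a1 a3 a4 a5 b3 c1) Am M = 2 * c1"
  "ad2 (ev Am) (rmat a1 a3 a4 a5 b3 c1) Bp N = 0"
  "ad2 (ev Am) (rmat a1 a3 a4 a5 b3 c1) Bp Ap = 0"
  "ad2 (ev Am) (rmat a1 a3 a4 a5 b3 c1) Bp Am = 0"
  "ad2 (ev Am) (rmat a1 a3 a4 a5 b3 c1) Bp Bp = 0"
  "ad2 (ev Am) (rmat a1 a3 a4 a5 b3 c1) Bp Bm = 0"
  "ad2 (ev Am) (rmat a1 a3 a4 a5 b3 c1) Bp M = - a5"
  "ad2 (ev Am) (rmat a1 a3 a4 a5 b3 c1) Bm N = 0"
  "ad2 (ev Am) (rmat a1 a3 a4 a5 b3 c1) Bm Ap = 0"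
  "ad2 (ev Am) (rmat a1 a3 a4 a5 b3 c1) Bm Am = 0"
  "ad2 (ev Am) (rmat a1 a3 a4 a5 b3 c1) Bm Bp = 0"
  "ad2 (ev Am) (rmat a1 a3 a4 a5 b3 c1) Bm Bm = 0"
  "ad2 (ev Am) (rmat a1 a3 a4 a5 b3 c1) Bm M = 0"
  "ad2 (ev Am) (rmat a1 a3 a4 a5 b3 c1) M N = - a1"
  "ad2 (ev Am) (rmat a1 a3 a4 a5 b3 c1) M Ap = - 2 * a4"
  "ad2 (ev Am) (rmat a1 a3 a4 a5 b3 c1) M Am = - 2 * c1"
  "ad2 (ev Am) (rmat a1 a3 a4 a5 b3 c1) M Bp = a5"
  "ad2 (ev Am) (rmat a1 a3 a4 a5 b3 c1) M Bm = 0"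
  "ad2 (ev Am) (rmat a1 a3 a4 a5 b3 c1) M M = 0"
  "ad2 (ev Bp) (rmat a1 a3 a4 a5 b3 c1) N N = 0"
  "ad2 (ev Bp) (rmat a1 a3 a4 a5 b3 c1) N Ap = 0"
  "ad2 (ev Bp) (rmat a1 a3 a4 a5 b3 c1) N Am = 0"
  "ad2 (ev Bp) (rmat a1 a3 a4 a5 b3 c1) N Bp = 0"
  "ad2 (ev Bp) (rmat a1 a3 a4 a5 b3 c1) N Bm = 0"
  "ad2 (ev Bp) (rmat a1 a3 a4 a5 b3 c1) N M = 0"
  "ad2 (ev Bp) (rmat a1 a3 a4 a5 b3 c1) Ap N = 0"
  "ad2 (ev Bp) (rmat a1 a3 a4 a5 b3 c1) Ap Ap = 0"
  "ad2 (ev Bp) (rmat a1 a3 a4 a5 b3 c1) Ap Am = 0"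
  "ad2 (ev Bp) (rmat a1 a3 a4 a5 b3 c1) Ap Bp = 2 * a1"
  "ad2 (ev Bp) (rmat a1 a3 a4 a5 b3 c1) Ap Bm = 0"
  "ad2 (ev Bp) (rmat a1 a3 a4 a5 b3 c1) Ap M = - 2 * b3"
  "ad2 (ev Bp) (rmat a1 a3 a4 a5 b3 c1) Am N = 0"
  "ad2 (ev Bp) (rmat a1 a3 a4 a5 b3 c1) Am Ap = 0"
  "ad2 (ev Bp) (rmat a1 a3 a4 a5 b3 c1) Am Am = 0"
  "ad2 (ev Bp) (rmat a1 a3 a4 a5 b3 c1) Am Bp = 0"
  "ad2 (ev Bp) (rmat a1 a3 a4 a5 b3 c1) Am Bm = 0"
  "ad2 (ev Bp) (rmat a1 a3 a4 a5 b3 c1) Am M = 0"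
  "ad2 (ev Bp) (rmat a1 a3 a4 a5 b3 c1) Bp N = 0"
  "ad2 (ev Bp) (rmat a1 a3 a4 a5 b3 c1) Bp Ap = - 2 * a1"
  "ad2 (ev Bp) (rmat a1 a3 a4 a5 b3 c1) Bp Am = 0"
  "ad2 (ev Bp) (rmat a1 a3 a4 a5 b3 c1) Bp Bp = 0"
  "ad2 (ev Bp) (rmat a1 a3 a4 a5 b3 c1) Bp Bm = 0"
  "ad2 (ev Bp) (rmat a1 a3 a4 a5 b3 c1) Bp M = - 2 * c1"
  "ad2 (ev Bp) (rmat a1 a3 a4 a5 b3 c1) Bm N = 0"
  "ad2 (ev Bp) (rmat a1 a3 a4 a5 b3 c1) Bm Ap = 0"
  "ad2 (ev Bp) (rmat a1 a3 a4 a5 b3 c1) Bm Am = 0"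
  "ad2 (ev Bp) (rmat a1 a3 a4 a5 b3 c1) Bm Bp = 0"
  "ad2 (ev Bp) (rmat a1 a3 a4 a5 b3 c1) Bm Bm = 0"
  "ad2 (ev Bp) (rmat a1 a3 a4 a5 b3 c1) Bm M = 0"
  "ad2 (ev Bp) (rmat a1 a3 a4 a5 b3 c1) M N = 0"
  "ad2 (ev Bp) (rmat a1 a3 a4 a5 b3 c1) M Ap = 2 * b3"
  "ad2 (ev Bp) (rmat a1 a3 a4 a5 b3 c1) M Am = 0"
  "ad2 (ev Bp) (rmat a1 a3 a4 a5 b3 c1) M Bp = 2 * c1"
  "ad2 (ev Bp) (rmat a1 a3 a4 a5 b3 c1) M Bm = 0"
  "ad2 (ev Bp) (rmat a1 a3 a4 a5 b3 c1) M M = 0"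
  "ad2 (ev Bm) (rmat a1 a3 a4 a5 b3 c1) N N = 0"
  "ad2 (ev Bm) (rmat a1 a3 a4 a5 b3 c1) N Ap = - 4 * a5"
  "ad2 (ev Bm) (rmat a1 a3 a4 a5 b3 c1) N Am = 2 * a1"
  "ad2 (ev Bm) (rmat a1 a3 a4 a5 b3 c1) N Bp = 0"
  "ad2 (ev Bm) (rmat a1 a3 a4 a5 b3 c1) N Bm = 0"
  "ad2 (ev Bm) (rmat a1 a3 a4 a5 b3 c1) N M = 4 * a4"
  "ad2 (ev Bm) (rmat a1 a3 a4 a5 b3 c1) Ap N = 4 * a5"
  "ad2 (ev Bm) (rmat a1 a3 a4 a5 b3 c1) Ap Ap = 0"
  "ad2 (ev Bm) (rmat a1 a3 a4 a5 b3 c1) Ap Am = 0"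
  "ad2 (ev Bm) (rmat a1 a3 a4 a5 b3 c1) Ap Bp = 0"
  "ad2 (ev Bm) (rmat a1 a3 a4 a5 b3 c1) Ap Bm = - 2 * a1"
  "ad2 (ev Bm) (rmat a1 a3 a4 a5 b3 c1) Ap M = 2 * a5"
  "ad2 (ev Bm) (rmat a1 a3 a4 a5 b3 c1) Am N = - 2 * a1"
  "ad2 (ev Bm) (rmat a1 a3 a4 a5 b3 c1) Am Ap = 0"
  "ad2 (ev Bm) (rmat a1 a3 a4 a5 b3 c1) Am Am = 0"
  "ad2 (ev Bm) (rmat a1 a3 a4 a5 b3 c1) Am Bp = 2 * a5"
  "ad2 (ev Bm) (rmat a1 a3 a4 a5 b3 c1) Am Bm = 0"
  "ad2 (ev Bm) (rmat a1 a3 a4 a5 b3 c1) Am M = 2 * a3"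
  "ad2 (ev Bm) (rmat a1 a3 a4 a5 b3 c1) Bp N = 0"
  "ad2 (ev Bm) (rmat a1 a3 a4 a5 b3 c1) Bp Ap = 0"
  "ad2 (ev Bm) (rmat a1 a3 a4 a5 b3 c1) Bp Am = - 2 * a5"
  "ad2 (ev Bm) (rmat a1 a3 a4 a5 b3 c1) Bp Bp = 0"
  "ad2 (ev Bm) (rmat a1 a3 a4 a5 b3 c1) Bp Bm = 0"
  "ad2 (ev Bm) (rmat a1 a3 a4 a5 b3 c1) Bp M = 0"
  "ad2 (ev Bm) (rmat a1 a3 a4 a5 b3 c1) Bm N = 0"
  "ad2 (ev Bm) (rmat a1 a3 a4 a5 b3 c1) Bm Ap = 2 * a1"
  "ad2 (ev Bm) (rmat a1 a3 a4 a5 b3 c1) Bm Am = 0"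
  "ad2 (ev Bm) (rmat a1 a3 a4 a5 b3 c1) Bm Bp = 0"
  "ad2 (ev Bm) (rmat a1 a3 a4 a5 b3 c1) Bm Bm = 0"
  "ad2 (ev Bm) (rmat a1 a3 a4 a5 b3 c1) Bm M = 2 * c1"
  "ad2 (ev Bm) (rmat a1 a3 a4 a5 b3 c1) M N = - 4 * a4"
  "ad2 (ev Bm) (rmat a1 a3 a4 a5 b3 c1) M Ap = - 2 * a5"
  "ad2 (ev Bm) (rmat a1 a3 a4 a5 b3 c1) M Am = - 2 * a3"
  "ad2 (ev Bm) (rmat a1 a3 a4 a5 b3 c1) M Bp = 0"
  "ad2 (ev Bm) (rmat a1 a3 a4 a5 b3 c1) M Bm = - 2 * c1"
  "ad2 (ev Bm) (rmat a1 a3 a4 a5 b3 c1) M M = 0"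
  "ad2 (ev M) (rmat a1 a3 a4 a5 b3 c1) N N = 0"
  "ad2 (ev M) (rmat a1 a3 a4 a5 b3 c1) N Ap = 0"
  "ad2 (ev M) (rmat a1 a3 a4 a5 b3 c1) N Am = 0"
  "ad2 (ev M) (rmat a1 a3 a4 a5 b3 c1) N Bp = 0"
  "ad2 (ev M) (rmat a1 a3 a4 a5 b3 c1) N Bm = 0"
  "ad2 (ev M) (rmat a1 a3 a4 a5 b3 c1) N M = 0"
  "ad2 (ev M) (rmat a1 a3 a4 a5 b3 c1) Ap N = 0"
  "ad2 (ev M) (rmat a1 a3 a4 a5 b3 c1) Ap Ap = 0"
  "ad2 (ev M) (rmat a1 a3 a4 a5 b3 c1) Ap Am = 0"
  "ad2 (ev M) (rmat a1 a3 a4 a5 b3 c1) Ap Bp = 0"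
  "ad2 (ev M) (rmat a1 a3 a4 a5 b3 c1) Ap Bm = 0"
  "ad2 (ev M) (rmat a1 a3 a4 a5 b3 c1) Ap M = 0"
  "ad2 (ev M) (rmat a1 a3 a4 a5 b3 c1) Am N = 0"
  "ad2 (ev M) (rmat a1 a3 a4 a5 b3 c1) Am Ap = 0"
  "ad2 (ev M) (rmat a1 a3 a4 a5 b3 c1) Am Am = 0"
  "ad2 (ev M) (rmat a1 a3 a4 a5 b3 c1) Am Bp = 0"
  "ad2 (ev M) (rmat a1 a3 a4 a5 b3 c1) Am Bm = 0"
  "ad2 (ev M) (rmat a1 a3 a4 a5 b3 c1) Am M = 0"
  "ad2 (ev M) (rmat a1 a3 a4 a5 b3 c1) Bp N = 0"
  "ad2 (ev M) (rmat a1 a3 a4 a5 b3 c1) Bp Ap = 0"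
  "ad2 (ev M) (rmat a1 a3 a4 a5 b3 c1) Bp Am = 0"
  "ad2 (ev M) (rmat a1 a3 a4 a5 b3 c1) Bp Bp = 0"
  "ad2 (ev M) (rmat a1 a3 a4 a5 b3 c1) Bp Bm = 0"
  "ad2 (ev M) (rmat a1 a3 a4 a5 b3 c1) Bp M = 0"
  "ad2 (ev M) (rmat a1 a3 a4 a5 b3 c1) Bm N = 0"
  "ad2 (ev M) (rmat a1 a3 a4 a5 b3 c1) Bm Ap = 0"
  "ad2 (ev M) (rmat a1 a3 a4 a5 b3 c1) Bm Am = 0"
  "ad2 (ev M) (rmat a1 a3 a4 a5 b3 c1) Bm Bp = 0"
  "ad2 (ev M) (rmat a1 a3 a4 a5 b3 c1) Bm Bm = 0"
  "ad2 (ev M) (rmat a1 a3 a4 a5 b3 c1) Bm M = 0"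
  "ad2 (ev M) (rmat a1 a3 a4 a5 b3 c1) M N = 0"
  "ad2 (ev M) (rmat a1 a3 a4 a5 b3 c1) M Ap = 0"
  "ad2 (ev M) (rmat a1 a3 a4 a5 b3 c1) M Am = 0"
  "ad2 (ev M) (rmat a1 a3 a4 a5 b3 c1) M Bp = 0"
  "ad2 (ev M) (rmat a1 a3 a4 a5 b3 c1) M Bm = 0"
  "ad2 (ev M) (rmat a1 a3 a4 a5 b3 c1) M M = 0"
  by (simp_all add: ad2_ev sum_UNIV_b sc_eval ev_simps)

lemma solve:
  fixes D :: "basis \<Rightarrow> tens2"
  assumes coc: "\<And>a b i j. (\<Sum>k\<in>UNIV. sc a b k * D k i j) = - ad2 (ev b) (D a) i j + ad2 (ev a) (D b) i j"
    and asym: "\<And>b i j. D b i j = - D b j i"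
    and z: "\<And>i j. D Ap i j = 0"
  shows "D b i j = ad2 (ev b) (rmat (D N N Ap) (D N Ap M) (D N Bp M / 2) (D N Ap Bp / 3) (- D N Am M) (D Am Am M / 2)) i j"
proof -
  have diag: "\<And>b i. D b i i = 0" using asym by (metis add.inverse_inverse add_eq_0_iff2 neg_equal_zero)
  note canon = asym[of _ Ap N] asym[of _ Am N] asym[of _ Am Ap] asym[of _ Bp N] asym[of _ Bp Ap] asym[of _ Bp Am] asym[of _ Bm N] asym[of _ Bm Ap] asym[of _ Bm Am] asym[of _ Bm Bp] asym[of _ M N] asym[of _ M Ap] asym[of _ M Am] asym[of _ M Bp] asym[of _ M Bm]
  note CS = ad2_ev sum_UNIV_b sc_eval ev_simps canon diag z
  have s1: "D N N Bm = 0"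
    using coc[of N Ap N Am] by (simp add: CS ; linarith)
  have s2: "D N N Am = 0"
    using coc[of N Ap N M] by (simp add: CS ; linarith)
  have s3: "D N Ap Bm = 0"
    using coc[of N Ap Ap Am] by (simp add: CS s2; linarith)
  have s4: "D N N Bp = 0"
    using coc[of N Ap Ap Bp] by (simp add: CS ; linarith)
  have s5: "D N Bp Bm = 0"
    using coc[of N Ap Am Bp] by (simp add: CS ; linarith)
  have s6: "D N Bm M = 0"
    using coc[of N Ap Am M] by (simp add: CS ; linarith)
  have s7: "D N Am Bp = 0"
    using coc[of N Ap Bp M] by (simp add: CS ; linarith)
  have s8: "D N Am Bm = 0"
    using coc[of N Ap Bm M] by (simp add: CS ; linarith)
  have s9: "D Am N Ap = 0"
    using coc[of N Am N Ap] by (simp add: CS s4; linarith)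
  have s10: "D Am N Bp = 0"
    using coc[of N Am N Bp] by (simp add: CS ; linarith)
  have s11: "D Am N Bm = 0"
    using coc[of N Am N Bm] by (simp add: CS ; linarith)
  have s12: "D Am N M = D N N Ap"
    using coc[of N Am N M] by (simp add: CS ; linarith)
  have s13: "D Am Ap Am = - D N N Ap"
    using coc[of N Am Ap Am] by (simp add: CS s7; linarith)
  have s14: "D Am Ap Bp = 0"
    using coc[of N Am Ap Bp] by (simp add: CS ; linarith)
  have s15: "D Am Ap M = D N Bp M"
    using coc[of N Am Ap M] by (simp add: CS ; linarith)
  have s16: "D Am Am Bp = 0"
    using coc[of N Am Am Bp] by (simp add: CS s4; linarith)
  have s17: "D Am Am Bm = 0"
    using coc[of N Am Am Bm] by (simp add: CS s1; linarith)
  have s18: "D Am Bp Bm = 0"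
    using coc[of N Am Bp Bm] by (simp add: CS ; linarith)
  have s19: "D Am Bp M = - (1/3) * D N Ap Bp"
    using coc[of N Am Bp M] by (simp add: CS ; linarith)
  have s20: "D Am Bm M = 0"
    using coc[of N Am Bm M] by (simp add: CS s3; linarith)
  have s21: "D Bp N Ap = 0"
    using coc[of N Bp N Ap] by (simp add: CS s2 s3; linarith)
  have s22: "D Bp N Am = 0"
    using coc[of N Bp N Am] by (simp add: CS s8; linarith)
  have s23: "D Bp N Bm = 0"
    using coc[of N Bp N Bm] by (simp add: CS ; linarith)
  have s24: "D Bp N M = 0"
    using coc[of N Bp N M] by (simp add: CS s6 s1; linarith)
  have s25: "D Bp Ap Am = 0"
    using coc[of N Bp Ap Am] by (simp add: CS ; linarith)
  have s26: "D Bp Ap Bp = 2 * D N N Ap"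
    using coc[of N Bp Ap Bp] by (simp add: CS s7; linarith)
  have s27: "D Bp Ap Bm = 0"
    using coc[of N Bp Ap Bm] by (simp add: CS s8; linarith)
  have s28: "D Bp Ap M = 2 * D N Am M"
    using coc[of N Bp Ap M] by (simp add: CS s3; linarith)
  have s29: "D Bp Am Bp = 0"
    using coc[of N Bp Am Bp] by (simp add: CS s2; linarith)
  have s30: "D Bp Am Bm = 0"
    using coc[of N Bp Am Bm] by (simp add: CS ; linarith)
  have s31: "D Bp Am M = 0"
    using coc[of N Bp Am M] by (simp add: CS s8; linarith)
  have s32: "D Bp Bp Bm = 0"
    using coc[of N Bp Bp Bm] by (simp add: CS s1; linarith)
  have s33: "D N N M = 0"
    using coc[of N Bp Bp M] by (simp add: CS s5; linarith)
  have s34: "D Bp Bm M = 0"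
    using coc[of N Bp Bm M] by (simp add: CS ; linarith)
  have s35: "D Bm N Ap = - (4/3) * D N Ap Bp"
    using coc[of N Bm N Ap] by (simp add: CS ; linarith)
  have s36: "D Bm N Am = 2 * D N N Ap"
    using coc[of N Bm N Am] by (simp add: CS s7; linarith)
  have s37: "D Bm N Bp = 0"
    using coc[of N Bm N Bp] by (simp add: CS ; linarith)
  have s38: "D Bm N M = 2 * D N Bp M"
    using coc[of N Bm N M] by (simp add: CS s4; linarith)
  have s39: "D Bm Ap Am = 0"
    using coc[of N Bm Ap Am] by (simp add: CS ; linarith)
  have s40: "D Bm Ap Bp = 0"
    using coc[of N Bm Ap Bp] by (simp add: CS ; linarith)
  have s41: "D Bm Ap Bm = - 2 * D N N Ap"
    using coc[of N Bm Ap Bm] by (simp add: CS ; linarith)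
  have s42: "D Bm Ap M = (2/3) * D N Ap Bp"
    using coc[of N Bm Ap M] by (simp add: CS ; linarith)
  have s43: "D Bm Am Bp = (2/3) * D N Ap Bp"
    using coc[of N Bm Am Bp] by (simp add: CS ; linarith)
  have s44: "D Bm Am Bm = 0"
    using coc[of N Bm Am Bm] by (simp add: CS s2 s3; linarith)
  have s45: "D Bm Am M = 2 * D N Ap M"
    using coc[of N Bm Am M] by (simp add: CS s7; linarith)
  have s46: "D Bm Bp Bm = 0"
    using coc[of N Bm Bp Bm] by (simp add: CS s4; linarith)
  have s47: "D Bm Bp M = 0"
    using coc[of N Bm Bp M] by (simp add: CS ; linarith)
  have s48: "D M N Ap = 0"
    using coc[of N M N Ap] by (simp add: CS ; linarith)
  have s49: "D M N Am = 0"
    using coc[of N M N Am] by (simp add: CS ; linarith)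
  have s50: "D M N Bp = 0"
    using coc[of N M N Bp] by (simp add: CS ; linarith)
  have s51: "D M N Bm = 0"
    using coc[of N M N Bm] by (simp add: CS ; linarith)
  have s52: "D M Ap Bp = 0"
    using coc[of N M Ap Bp] by (simp add: CS ; linarith)
  have s53: "D M Ap Bm = 0"
    using coc[of N M Ap Bm] by (simp add: CS ; linarith)
  have s54: "D M Ap M = 0"
    using coc[of N M Ap M] by (simp add: CS ; linarith)
  have s55: "D M Am Bp = 0"
    using coc[of N M Am Bp] by (simp add: CS ; linarith)
  have s56: "D M Am Bm = 0"
    using coc[of N M Am Bm] by (simp add: CS ; linarith)
  have s57: "D M Am M = 0"
    using coc[of N M Am M] by (simp add: CS ; linarith)
  have s58: "D M Bp M = 0"
    using coc[of N M Bp M] by (simp add: CS ; linarith)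
  have s59: "D M Bm M = 0"
    using coc[of N M Bm M] by (simp add: CS ; linarith)
  have s60: "D N Ap Am = 0"
    using coc[of Ap N Ap M] by (simp add: CS s33; linarith)
  have s61: "D M Bp Bm = 0"
    using coc[of Ap Am Bp Bm] by (simp add: CS ; linarith)
  have s62: "D Bp N Bp = 0"
    using coc[of Ap Bp Ap Bp] by (simp add: CS ; linarith)
  have s63: "D Bm Bm M = D Am Am M"
    using coc[of Ap Bm Am M] by (simp add: CS ; linarith)
  have s64: "D Am N Am = 0"
    using coc[of Am Bp Am Bp] by (simp add: CS s62; linarith)
  have s65: "D Am Ap Bm = 0"
    using coc[of Bp Am N Ap] by (simp add: CS s64 s62; linarith)
  have s66: "D Bp Bp M = - D Am Am M"
    using coc[of Bp Am Ap M] by (simp add: CS s65; linarith)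
  have s67: "D M Ap Am = 0"
    using coc[of Bp Bm Ap Am] by (simp add: CS s60; linarith)
  have s68: "D Bm N Bm = 0"
    using coc[of Bp Bm Bp Bm] by (simp add: CS s5 s62 s61; linarith)
  have s69: "D M N M = 0"
    using coc[of Bp Bm M N] by (simp add: CS s33 s62 s66 s68 s63; linarith)
  note SOL = s1 s2 s3 s4 s5 s6 s7 s8 s9 s10 s11 s12 s13 s14 s15 s16 s17 s18 s19 s20 s21 s22 s23 s24 s25 s26 s27 s28 s29 s30 s31 s32 s33 s34 s35 s36 s37 s38 s39 s40 s41 s42 s43 s44 s45 s46 s47 s48 s49 s50 s51 s52 s53 s54 s55 s56 s57 s58 s59 s60 s61 s62 s63 s64 s65 s66 s67 s68 s69

  show ?thesis
    by (cases b; cases i; cases j; (simp add: canon diag z SOL; linarith?))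
qed

lemma lie_add1: "lie (\<lambda>k. x k + y k) z = (\<lambda>k. lie x z k + lie y z k)"
  unfolding lie_def by (simp add: algebra_simps sum.distrib)
lemma lie_smul1: "lie (\<lambda>k. c * x k) z = (\<lambda>k. c * lie x z k)"
  unfolding lie_def by (simp add: algebra_simps sum_distrib_left)

lemma ad2_add: "ad2 (\<lambda>k. x k + y k) t = (\<lambda>i j. ad2 x t i j + ad2 y t i j)"
  unfolding ad2_def lie_add1 by (simp add: algebra_simps sum.distrib)
lemma ad2_smul: "ad2 (\<lambda>k. c * x k) t = (\<lambda>i j. c * ad2 x t i j)"
  unfolding ad2_def lie_smul1 by (simp add: algebra_simps sum_distrib_left)

lemma repL: "lie (lie x y) (ev k) i = (\<Sum>m\<in>UNIV. lie y (ev k) m * lie x (ev m) i - lie x (ev k) m * lie y (ev m) i)"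
  unfolding lie_ev
  by (cases k; cases i; simp add: lie_def sum_UNIV_b sc_eval ev_simps algebra_simps)

lemma ad2_rep: "ad2 (lie x y) t i j = - ad2 y (ad2 x t) i j + ad2 x (ad2 y t) i j"
  unfolding ad2_def repL
  by (simp add: sum_UNIV_b algebra_simps)

definition GG :: "(basis \<Rightarrow> tens2) \<Rightarrow> basis \<Rightarrow> basis \<Rightarrow> basis \<Rightarrow> basis \<Rightarrow> real" where
  "GG D u v w k = (\<Sum>j\<in>UNIV. D j v w * D k u j)"

lemma dbr_exp: "dual_br \<delta> \<xi> (dual_br \<delta> \<eta> \<zeta>) k =
   (\<Sum>u\<in>UNIV. \<Sum>v\<in>UNIV. \<Sum>w\<in>UNIV. \<xi> u * \<eta> v * \<zeta> w * GG (\<lambda>b. \<delta> (ev b)) u v w k)"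
proof -
  have "dual_br \<delta> \<xi> (dual_br \<delta> \<eta> \<zeta>) k =
     (\<Sum>i\<in>UNIV. \<Sum>j\<in>UNIV. \<Sum>a\<in>UNIV. \<Sum>b\<in>UNIV. \<xi> i * \<eta> a * \<zeta> b * (\<delta> (ev j) a b * \<delta> (ev k) i j))"
    by (simp add: dual_br_def sum_distrib_left sum_distrib_right mult_ac)
  also have "\<dots> = (\<Sum>i\<in>UNIV. \<Sum>a\<in>UNIV. \<Sum>b\<in>UNIV. \<Sum>j\<in>UNIV. \<xi> i * \<eta> a * \<zeta> b * (\<delta> (ev j) a b * \<delta> (ev k) i j))"
    by (rule sum.cong[OF refl], rule trans[OF sum.swap], rule sum.cong[OF refl], rule sum.swap)
  also have "\<dots> = (\<Sum>u\<in>UNIV. \<Sum>v\<in>UNIV. \<Sum>w\<in>UNIV. \<xi> u * \<eta> v * \<zeta> w * GG (\<lambda>b. \<delta> (ev b)) u v w k)"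
    by (simp add: GG_def sum_distrib_left)
  finally show ?thesis .
qed

lemma cyc3: "(\<Sum>u\<in>UNIV. \<Sum>v\<in>UNIV. \<Sum>w\<in>UNIV. h v w u) = (\<Sum>a\<in>UNIV. \<Sum>b\<in>UNIV. \<Sum>c\<in>UNIV. (h a b c :: real))"
  by (rule trans[OF sum.swap], rule sum.cong[OF refl], rule sum.swap)

lemma cyc3': "(\<Sum>u\<in>UNIV. \<Sum>v\<in>UNIV. \<Sum>w\<in>UNIV. h w u v) = (\<Sum>a\<in>UNIV. \<Sum>b\<in>UNIV. \<Sum>c\<in>UNIV. (h a b c :: real))"
  by (rule trans[OF sum.cong[OF refl sum.swap]], rule sum.swap)

lemma jac_from_basis:
  assumes "\<And>u v w k. GG (\<lambda>b. \<delta> (ev b)) u v w k + GG (\<lambda>b. \<delta> (ev b)) v w u k + GG (\<lambda>b. \<delta> (ev b)) w u v k = 0"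
  shows "(\<lambda>k. dual_br \<delta> \<xi> (dual_br \<delta> \<eta> \<zeta>) k + dual_br \<delta> \<eta> (dual_br \<delta> \<zeta> \<xi>) k
                    + dual_br \<delta> \<zeta> (dual_br \<delta> \<xi> \<eta>) k) = (\<lambda>k. 0)"
proof
  fix k
  define G where "G = GG (\<lambda>b. \<delta> (ev b))"
  have S2: "(\<Sum>u\<in>UNIV. \<Sum>v\<in>UNIV. \<Sum>w\<in>UNIV. \<eta> u * \<zeta> v * \<xi> w * G u v w k)
     = (\<Sum>u\<in>UNIV. \<Sum>v\<in>UNIV. \<Sum>w\<in>UNIV. \<xi> u * \<eta> v * \<zeta> w * G v w u k)"
    using cyc3[of "\<lambda>a b c. \<eta> a * \<zeta> b * \<xi> c * G a b c k"] by (simp add: mult_ac)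
  have S3: "(\<Sum>u\<in>UNIV. \<Sum>v\<in>UNIV. \<Sum>w\<in>UNIV. \<zeta> u * \<xi> v * \<eta> w * G u v w k)
     = (\<Sum>u\<in>UNIV. \<Sum>v\<in>UNIV. \<Sum>w\<in>UNIV. \<xi> u * \<eta> v * \<zeta> w * G w u v k)"
    using cyc3'[of "\<lambda>a b c. \<zeta> a * \<xi> b * \<eta> c * G a b c k"] by (simp add: mult_ac)
  have Z: "(\<Sum>u\<in>UNIV. \<Sum>v\<in>UNIV. \<Sum>w\<in>UNIV. \<xi> u * \<eta> v * \<zeta> w * (G u v w k + G v w u k + G w u v k)) = 0"
    using assms by (simp add: G_def)
  have "(\<Sum>u\<in>UNIV. \<Sum>v\<in>UNIV. \<Sum>w\<in>UNIV. \<xi> u * \<eta> v * \<zeta> w * (G u v w k + G v w u k + G w u v k)) =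
     (\<Sum>u\<in>UNIV. \<Sum>v\<in>UNIV. \<Sum>w\<in>UNIV. \<xi> u * \<eta> v * \<zeta> w * G u v w k)
   + (\<Sum>u\<in>UNIV. \<Sum>v\<in>UNIV. \<Sum>w\<in>UNIV. \<xi> u * \<eta> v * \<zeta> w * G v w u k)
   + (\<Sum>u\<in>UNIV. \<Sum>v\<in>UNIV. \<Sum>w\<in>UNIV. \<xi> u * \<eta> v * \<zeta> w * G w u v k)"
    by (simp add: distrib_left sum.distrib)
  then show "dual_br \<delta> \<xi> (dual_br \<delta> \<eta> \<zeta>) k + dual_br \<delta> \<eta> (dual_br \<delta> \<zeta> \<xi>) k
                    + dual_br \<delta> \<zeta> (dual_br \<delta> \<xi> \<eta>) k = 0"
    using Z S2 S3 by (simp add: dbr_exp G_def)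
qed

lemma Jb: assumes s: "a1*a4 + a5*c1 = 0"
  shows "GG (\<lambda>b. ad2 (ev b) (rmat a1 a3 a4 a5 b3 c1)) u v w k + GG (\<lambda>b. ad2 (ev b) (rmat a1 a3 a4 a5 b3 c1)) v w u k
       + GG (\<lambda>b. ad2 (ev b) (rmat a1 a3 a4 a5 b3 c1)) w u v k = 0"
proof -
  have s': "a1*a4 = -(a5*c1)" using s by linarith
  show ?thesis
  unfolding GG_def sum_UNIV_b
  by (cases u; cases v; cases w; cases k; simp add: s' mult.commute[of c1 a5] mult.commute[of a4 a1] mult.left_commute[of a1 _ a4] mult.assoc[of _ a4 a1])
qed
lemma ad2_lin_exp: "ad2 X t i j = (\<Sum>b\<in>UNIV. X b * ad2 (ev b) t i j)"
proof -
  have "ad2 X t i j = (\<Sum>k\<in>UNIV. \<Sum>a\<in>UNIV. X a * (t k j * sc a k i)) + (\<Sum>l\<in>UNIV. \<Sum>a\<in>UNIV. X a * (t i l * sc a l j))"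
    unfolding ad2_def lie_ev by (simp add: sum_distrib_left mult_ac)
  also have "\<dots> = (\<Sum>a\<in>UNIV. \<Sum>k\<in>UNIV. X a * (t k j * sc a k i)) + (\<Sum>a\<in>UNIV. \<Sum>l\<in>UNIV. X a * (t i l * sc a l j))"
    by (rule arg_cong2[where f="(+)"]; rule sum.swap)
  also have "\<dots> = (\<Sum>b\<in>UNIV. X b * ad2 (ev b) t i j)"
    unfolding ad2_ev by (simp add: sum_distrib_left distrib_left sum.distrib)
  finally show ?thesis .
qed

lemma lin_exp:
  assumes "lin2 \<delta>"
  shows "\<delta> X = (\<lambda>i j. \<Sum>b\<in>UNIV. X b * \<delta> (ev b) i j)"
proof -
  have hadd: "\<And>x y. \<delta> (\<lambda>k. x k + y k) = (\<lambda>i j. \<delta> x i j + \<delta> y i j)"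
    and hsm: "\<And>c x. \<delta> (\<lambda>k. c * x k) = (\<lambda>i j. c * \<delta> x i j)"
    using assms unfolding lin2_def by blast+
  have zero: "\<delta> (\<lambda>k. 0) = (\<lambda>i j. 0)" using hsm[of 0 X] by simp
  have gen: "finite S \<Longrightarrow> \<delta> (\<lambda>k. \<Sum>b\<in>S. X b * ev b k) = (\<lambda>i j. \<Sum>b\<in>S. X b * \<delta> (ev b) i j)" for S
  proof (induction S rule: finite_induct)
    case empty then show ?case using zero by simp
  next
    case (insert c S)
    have e1: "(\<lambda>k. \<Sum>b\<in>insert c S. X b * ev b k) = (\<lambda>k. (\<lambda>k. X c * ev c k) k + (\<lambda>k. \<Sum>b\<in>S. X b * ev b k) k)"
      using insert by simp
    have e2: "\<delta> (\<lambda>k. X c * ev c k) = (\<lambda>i j. X c * \<delta> (ev c) i j)" using hsm[of "X c" "ev c"] by simp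
    show ?case unfolding e1 hadd e2 insert.IH using insert by simp
  qed
  have "(\<lambda>k. \<Sum>b\<in>UNIV. X b * ev b k) = X" by (simp add: ev_def m4)
  then show ?thesis using gen[of UNIV] by simp
qed

lemma dbr_ev1: "dual_br \<delta> (ev i) \<eta> k = (\<Sum>c\<in>UNIV. \<eta> c * \<delta> (ev k) i c)"
proof -
  have "dual_br \<delta> (ev i) \<eta> k = (\<Sum>a\<in>UNIV. ev i a * (\<Sum>c\<in>UNIV. \<eta> c * \<delta> (ev k) a c))"
    unfolding dual_br_def by (simp add: sum_distrib_left mult.assoc)
  also have "\<dots> = (\<Sum>c\<in>UNIV. \<eta> c * \<delta> (ev k) i c)" by (simp add: ev_def m3)
  finally show ?thesis .
qed

lemma dbr_ev: "dual_br \<delta> (ev i) (ev j) k = \<delta> (ev k) i j"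
  unfolding dbr_ev1 by (simp add: ev_def m3)

lemma dbr_addL: "dual_br \<delta> (\<lambda>x. \<xi> x + \<eta> x) \<zeta> k = dual_br \<delta> \<xi> \<zeta> k + dual_br \<delta> \<eta> \<zeta> k"
  unfolding dual_br_def by (simp add: distrib_right sum.distrib)
lemma dbr_addR: "dual_br \<delta> \<zeta> (\<lambda>x. \<xi> x + \<eta> x) k = dual_br \<delta> \<zeta> \<xi> k + dual_br \<delta> \<zeta> \<eta> k"
  unfolding dual_br_def by (simp add: distrib_left distrib_right sum.distrib)

lemma alt0:
  assumes "\<And>i j. A i j = - A j i"
  shows "(\<Sum>i\<in>UNIV. \<Sum>j\<in>UNIV. \<xi> i * \<xi> j * A i j) = (0::real)"
proof -
  let ?S = "(\<Sum>i\<in>UNIV. \<Sum>j\<in>UNIV. \<xi> i * \<xi> j * A i j)"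
  have e: "\<xi> i * \<xi> j * A i j = - (\<xi> j * \<xi> i * A j i)" for i j by (simp add: assms[of i j])
  have "?S = (\<Sum>i\<in>UNIV. \<Sum>j\<in>UNIV. - (\<xi> j * \<xi> i * A j i))" by (rule sum.cong[OF refl], rule sum.cong[OF refl], rule e)
  also have "\<dots> = - (\<Sum>i\<in>UNIV. \<Sum>j\<in>UNIV. \<xi> j * \<xi> i * A j i)" by (simp add: sum_negf)
  also have "(\<Sum>i\<in>UNIV. \<Sum>j\<in>UNIV. \<xi> j * \<xi> i * A j i) = ?S" by (rule sum.swap)
  finally show ?thesis by simp
qed

lemma ad2_asym: "ad2 (ev b) (rmat a1 a3 a4 a5 b3 c1) i j = - ad2 (ev b) (rmat a1 a3 a4 a5 b3 c1) j i"
  by (cases b; cases i; cases j; simp)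

lemma jac_extract:
  assumes hD: "\<And>b. \<delta> (ev b) = ad2 (ev b) (rmat a1 a3 a4 a5 b3 c1)" and J: "dual_is_lie \<delta>"
  shows "a1*a4+a5*c1 = 0"
proof -
  have "(\<lambda>k. dual_br \<delta> (ev N) (dual_br \<delta> (ev M) (ev Ap)) k + dual_br \<delta> (ev M) (dual_br \<delta> (ev Ap) (ev N)) k
                    + dual_br \<delta> (ev Ap) (dual_br \<delta> (ev N) (ev M)) k) = (\<lambda>k. 0)"
    using J unfolding dual_is_lie_def by blast
  from fun_cong[OF this, of Bm]
  have "dual_br \<delta> (ev N) (dual_br \<delta> (ev M) (ev Ap)) Bm + dual_br \<delta> (ev M) (dual_br \<delta> (ev Ap) (ev N)) Bm
                    + dual_br \<delta> (ev Ap) (dual_br \<delta> (ev N) (ev M)) Bm = 0" by simp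
  then show ?thesis by (simp add: dbr_ev1 hD sum_UNIV_b ev_simps)
qed

lemma ad2_M: "ad2 (ev M) (rmat a1 a3 a4 a5 b3 c1) = (\<lambda>i j. 0)"
  unfolding fun2_eq by (intro allI, case_tac i; case_tac j; simp)

lemma alt3_inv: "ad3 X (alt3 Ap Am M) = (\<lambda>i j k. 0)"
  unfolding fun3_eq ad3_def lie_ev
  by (intro allI, case_tac i; case_tac j; case_tac k; simp add: sum_UNIV_b sc_eval ev_simps alt3_def)

lemma ad3_scale: "ad3 X (\<lambda>i j k. c * T i j k) = (\<lambda>i j k. c * ad3 X T i j k)"
  unfolding ad3_def by (simp add: sum_distrib_left algebra_simps)


lemma partOne: "\<forall>\<delta>. (lie_bialgebra \<delta> \<and> \<delta> (ev Ap) = (\<lambda>i j. 0)) \<longleftrightarrow>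
            (\<exists>a1 a3 a4 a5 b3 c1. a1 * a4 + a5 * c1 = 0 \<and>
               (\<forall>X. \<delta> X = ad2 X (rmat a1 a3 a4 a5 b3 c1)))"
proof (intro allI iffI)
  fix \<delta> :: "vec \<Rightarrow> tens2"
  assume H: "lie_bialgebra \<delta> \<and> \<delta> (ev Ap) = (\<lambda>i j. 0)"
  then have lin: "lin2 \<delta>" and coc0: "cocycle \<delta>" and dl: "dual_is_lie \<delta>" and z0: "\<delta> (ev Ap) = (\<lambda>i j. 0)"
    unfolding lie_bialgebra_def by auto
  define D where "D = (\<lambda>b. \<delta> (ev b))"
  have coc: "(\<Sum>k\<in>UNIV. sc a b k * D k i j) = - ad2 (ev b) (D a) i j + ad2 (ev a) (D b) i j" for a b i j
  proof -
    have e: "\<delta> (lie (ev a) (ev b)) = (\<lambda>i j. - ad2 (ev b) (\<delta> (ev a)) i j + ad2 (ev a) (\<delta> (ev b)) i j)"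
      using coc0 unfolding cocycle_def by blast
    have e2: "\<delta> (lie (ev a) (ev b)) i j = (\<Sum>k\<in>UNIV. sc a b k * D k i j)"
      using lin_exp[OF lin, of "lie (ev a) (ev b)"] by (simp add: lie_ev_ev D_def)
    show ?thesis using e e2 by (simp add: D_def)
  qed
  have dz: "D b i i = 0" for b i
  proof -
    have "dual_br \<delta> (ev i) (ev i) = (\<lambda>k. 0)" using dl unfolding dual_is_lie_def by blast
    from fun_cong[OF this, of b] show ?thesis by (simp add: dbr_ev D_def)
  qed
  have asym: "D b i j = - D b j i" for b i j
  proof -
    have "dual_br \<delta> (\<lambda>x. ev i x + ev j x) (\<lambda>x. ev i x + ev j x) = (\<lambda>k. 0)" using dl unfolding dual_is_lie_def by blast
    from fun_cong[OF this, of b] have "D b i i + D b i j + (D b j i + D b j j) = 0"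
      by (simp add: dbr_addL dbr_addR dbr_ev D_def)
    then show ?thesis using dz[of b i] dz[of b j] by linarith
  qed
  have z: "D Ap i j = 0" for i j using z0 by (simp add: D_def)
  define p1 where "p1 = D N N Ap"
  define p3 where "p3 = D N Ap M"
  define p4 where "p4 = D N Bp M / 2"
  define p5 where "p5 = D N Ap Bp / 3"
  define q3 where "q3 = - D N Am M"
  define r1 where "r1 = D Am Am M / 2"
  have S: "D b i j = ad2 (ev b) (rmat p1 p3 p4 p5 q3 r1) i j" for b i j
    unfolding p1_def p3_def p4_def p5_def q3_def r1_def by (rule solve[OF coc asym z])
  have hD: "\<delta> (ev b) = ad2 (ev b) (rmat p1 p3 p4 p5 q3 r1)" for b
    using S[of b] unfolding D_def by (intro ext) simp
  have s: "p1*p4+p5*r1 = 0" by (rule jac_extract[OF hD dl])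
  have hX: "\<delta> X = ad2 X (rmat p1 p3 p4 p5 q3 r1)" for X
  proof (intro ext)
    fix i j
    have "\<delta> X i j = (\<Sum>b\<in>UNIV. X b * \<delta> (ev b) i j)" using lin_exp[OF lin, of X] by simp
    also have "\<dots> = (\<Sum>b\<in>UNIV. X b * ad2 (ev b) (rmat p1 p3 p4 p5 q3 r1) i j)" by (simp add: hD)
    also have "\<dots> = ad2 X (rmat p1 p3 p4 p5 q3 r1) i j" by (rule ad2_lin_exp[symmetric])
    finally show "\<delta> X i j = ad2 X (rmat p1 p3 p4 p5 q3 r1) i j" .
  qed
  show "\<exists>a1 a3 a4 a5 b3 c1. a1 * a4 + a5 * c1 = 0 \<and> (\<forall>X. \<delta> X = ad2 X (rmat a1 a3 a4 a5 b3 c1))"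
    using s hX by blast
next
  fix \<delta> :: "vec \<Rightarrow> tens2"
  assume "\<exists>a1 a3 a4 a5 b3 c1. a1 * a4 + a5 * c1 = 0 \<and> (\<forall>X. \<delta> X = ad2 X (rmat a1 a3 a4 a5 b3 c1))"
  then obtain a1 a3 a4 a5 b3 c1 where s: "a1 * a4 + a5 * c1 = 0" and hX: "\<forall>X. \<delta> X = ad2 X (rmat a1 a3 a4 a5 b3 c1)"
    by blast
  have de: "\<delta> = (\<lambda>X. ad2 X (rmat a1 a3 a4 a5 b3 c1))" using hX by (intro ext) simp
  have L: "lin2 \<delta>" unfolding de lin2_def by (simp add: ad2_add ad2_smul)
  have C: "cocycle \<delta>" unfolding de cocycle_def by (simp add: fun_eq_iff ad2_rep)
  have A: "dual_br \<delta> \<xi> \<xi> = (\<lambda>k. 0)" for \<xi>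
  proof (intro ext)
    fix k
    show "dual_br \<delta> \<xi> \<xi> k = 0"
      unfolding de dual_br_def by (rule alt0, rule ad2_asym)
  qed
  have Jc: "(\<lambda>k. dual_br \<delta> \<xi> (dual_br \<delta> \<eta> \<zeta>) k + dual_br \<delta> \<eta> (dual_br \<delta> \<zeta> \<xi>) k
                    + dual_br \<delta> \<zeta> (dual_br \<delta> \<xi> \<eta>) k) = (\<lambda>k. 0)" for \<xi> \<eta> \<zeta>
    unfolding de by (rule jac_from_basis, rule Jb[OF s])
  have DL: "dual_is_lie \<delta>" unfolding dual_is_lie_def using A Jc by blast
  show "lie_bialgebra \<delta> \<and> \<delta> (ev Ap) = (\<lambda>i j. 0)"
    unfolding lie_bialgebra_def using L C DL by (simp add: de ad2_Ap)
qed

lemma partTwo: "\<forall>a1 a3 a4 a5 b3 c1. a1 * a4 + a5 * c1 = 0 \<longrightarrow>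
        (let r = rmat a1 a3 a4 a5 b3 c1 in
          ad2 (ev Ap) r = (\<lambda>i j. 0) \<and> ad2 (ev M) r = (\<lambda>i j. 0)
        \<and> ad2 (ev N) r = a1 \<cdot>\<^sub>t wedge (ev N) (ev Ap) \<oplus>\<^sub>t a3 \<cdot>\<^sub>t wedge (ev Ap) (ev M)
             \<oplus>\<^sub>t (2 * a4) \<cdot>\<^sub>t wedge (ev Bp) (ev M) \<oplus>\<^sub>t (3 * a5) \<cdot>\<^sub>t wedge (ev Ap) (ev Bp)
             \<ominus>\<^sub>t b3 \<cdot>\<^sub>t wedge (ev Am) (ev M)
        \<and> ad2 (ev Am) r = a1 \<cdot>\<^sub>t (wedge (ev N) (ev M) \<ominus>\<^sub>t wedge (ev Ap) (ev Am))
             \<oplus>\<^sub>t (2 * a4) \<cdot>\<^sub>t wedge (ev Ap) (ev M) \<ominus>\<^sub>t a5 \<cdot>\<^sub>t wedge (ev Bp) (ev M)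
             \<oplus>\<^sub>t (2 * c1) \<cdot>\<^sub>t wedge (ev Am) (ev M)
        \<and> ad2 (ev Bp) r = (2 * a1) \<cdot>\<^sub>t wedge (ev Ap) (ev Bp) \<ominus>\<^sub>t (2 * b3) \<cdot>\<^sub>t wedge (ev Ap) (ev M)
             \<ominus>\<^sub>t (2 * c1) \<cdot>\<^sub>t wedge (ev Bp) (ev M)
        \<and> ad2 (ev Bm) r = (2 * a1) \<cdot>\<^sub>t (wedge (ev N) (ev Am) \<ominus>\<^sub>t wedge (ev Ap) (ev Bm))
             \<oplus>\<^sub>t (2 * a3) \<cdot>\<^sub>t wedge (ev Am) (ev M) \<oplus>\<^sub>t (4 * a4) \<cdot>\<^sub>t wedge (ev N) (ev M)
             \<ominus>\<^sub>t (2 * a5) \<cdot>\<^sub>t ((2::real) \<cdot>\<^sub>t wedge (ev N) (ev Ap) \<ominus>\<^sub>t wedge (ev Am) (ev Bp)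
                                  \<ominus>\<^sub>t wedge (ev Ap) (ev M))
             \<oplus>\<^sub>t (2 * c1) \<cdot>\<^sub>t wedge (ev Bm) (ev M)
        \<and> (schouten r = (\<lambda>i j k. 0) \<longleftrightarrow> a1 * b3 - c1 ^ 2 = 0)
        \<and> (\<forall>X. ad3 X (schouten r) = (\<lambda>i j k. 0)))"
proof (intro allI impI)
  fix a1 a3 a4 a5 b3 c1 :: real
  assume s: "a1 * a4 + a5 * c1 = 0"
  have sch: "schouten (rmat a1 a3 a4 a5 b3 c1) = (\<lambda>i j k. (a1*b3 - c1^2) * alt3 Ap Am M i j k)"
    by (intro ext) (simp add: schouten_r s)
  have e1: "schouten (rmat a1 a3 a4 a5 b3 c1) = (\<lambda>i j k. 0) \<longleftrightarrow> a1 * b3 - c1 ^ 2 = 0"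
  proof
    assume "schouten (rmat a1 a3 a4 a5 b3 c1) = (\<lambda>i j k. 0)"
    from fun_cong[OF fun_cong[OF fun_cong[OF this[unfolded sch], of Ap], of Am], of M]
    show "a1 * b3 - c1 ^ 2 = 0" by (simp add: alt3_def ev_simps)
  next
    assume "a1 * b3 - c1 ^ 2 = 0"
    then show "schouten (rmat a1 a3 a4 a5 b3 c1) = (\<lambda>i j k. 0)" unfolding sch by simp
  qed
  have e2: "ad3 X (schouten (rmat a1 a3 a4 a5 b3 c1)) = (\<lambda>i j k. 0)" for X
    unfolding sch ad3_scale alt3_inv by simp
  have eN: "ad2 (ev N) (rmat a1 a3 a4 a5 b3 c1) = a1 \<cdot>\<^sub>t wedge (ev N) (ev Ap) \<oplus>\<^sub>t a3 \<cdot>\<^sub>t wedge (ev Ap) (ev M)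
             \<oplus>\<^sub>t (2 * a4) \<cdot>\<^sub>t wedge (ev Bp) (ev M) \<oplus>\<^sub>t (3 * a5) \<cdot>\<^sub>t wedge (ev Ap) (ev Bp)
             \<ominus>\<^sub>t b3 \<cdot>\<^sub>t wedge (ev Am) (ev M)"
    unfolding fun2_eq tadd_def tsub_def tsc_def wedge_def
    by (intro allI, case_tac i; case_tac j; simp add: ev_simps)
  have eAm: "ad2 (ev Am) (rmat a1 a3 a4 a5 b3 c1) = a1 \<cdot>\<^sub>t (wedge (ev N) (ev M) \<ominus>\<^sub>t wedge (ev Ap) (ev Am))
             \<oplus>\<^sub>t (2 * a4) \<cdot>\<^sub>t wedge (ev Ap) (ev M) \<ominus>\<^sub>t a5 \<cdot>\<^sub>t wedge (ev Bp) (ev M)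
             \<oplus>\<^sub>t (2 * c1) \<cdot>\<^sub>t wedge (ev Am) (ev M)"
    unfolding fun2_eq tadd_def tsub_def tsc_def wedge_def
    by (intro allI, case_tac i; case_tac j; simp add: ev_simps)
  have eBp: "ad2 (ev Bp) (rmat a1 a3 a4 a5 b3 c1) = (2 * a1) \<cdot>\<^sub>t wedge (ev Ap) (ev Bp) \<ominus>\<^sub>t (2 * b3) \<cdot>\<^sub>t wedge (ev Ap) (ev M)
             \<ominus>\<^sub>t (2 * c1) \<cdot>\<^sub>t wedge (ev Bp) (ev M)"
    unfolding fun2_eq tadd_def tsub_def tsc_def wedge_def
    by (intro allI, case_tac i; case_tac j; simp add: ev_simps)
  have eBm: "ad2 (ev Bm) (rmat a1 a3 a4 a5 b3 c1) = (2 * a1) \<cdot>\<^sub>t (wedge (ev N) (ev Am) \<ominus>\<^sub>t wedge (ev Ap) (ev Bm))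
             \<oplus>\<^sub>t (2 * a3) \<cdot>\<^sub>t wedge (ev Am) (ev M) \<oplus>\<^sub>t (4 * a4) \<cdot>\<^sub>t wedge (ev N) (ev M)
             \<ominus>\<^sub>t (2 * a5) \<cdot>\<^sub>t ((2::real) \<cdot>\<^sub>t wedge (ev N) (ev Ap) \<ominus>\<^sub>t wedge (ev Am) (ev Bp)
                                  \<ominus>\<^sub>t wedge (ev Ap) (ev M))
             \<oplus>\<^sub>t (2 * c1) \<cdot>\<^sub>t wedge (ev Bm) (ev M)"
    unfolding fun2_eq tadd_def tsub_def tsc_def wedge_def
    by (intro allI, case_tac i; case_tac j; simp add: ev_simps)
  show "let r = rmat a1 a3 a4 a5 b3 c1 in ad2 (ev Ap) r = (\<lambda>i j. 0) \<and> ad2 (ev M) r = (\<lambda>i j. 0)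
        \<and> ad2 (ev N) r = a1 \<cdot>\<^sub>t wedge (ev N) (ev Ap) \<oplus>\<^sub>t a3 \<cdot>\<^sub>t wedge (ev Ap) (ev M)
             \<oplus>\<^sub>t (2 * a4) \<cdot>\<^sub>t wedge (ev Bp) (ev M) \<oplus>\<^sub>t (3 * a5) \<cdot>\<^sub>t wedge (ev Ap) (ev Bp)
             \<ominus>\<^sub>t b3 \<cdot>\<^sub>t wedge (ev Am) (ev M)
        \<and> ad2 (ev Am) r = a1 \<cdot>\<^sub>t (wedge (ev N) (ev M) \<ominus>\<^sub>t wedge (ev Ap) (ev Am))
             \<oplus>\<^sub>t (2 * a4) \<cdot>\<^sub>t wedge (ev Ap) (ev M) \<ominus>\<^sub>t a5 \<cdot>\<^sub>t wedge (ev Bp) (ev M)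
             \<oplus>\<^sub>t (2 * c1) \<cdot>\<^sub>t wedge (ev Am) (ev M)
        \<and> ad2 (ev Bp) r = (2 * a1) \<cdot>\<^sub>t wedge (ev Ap) (ev Bp) \<ominus>\<^sub>t (2 * b3) \<cdot>\<^sub>t wedge (ev Ap) (ev M)
             \<ominus>\<^sub>t (2 * c1) \<cdot>\<^sub>t wedge (ev Bp) (ev M)
        \<and> ad2 (ev Bm) r = (2 * a1) \<cdot>\<^sub>t (wedge (ev N) (ev Am) \<ominus>\<^sub>t wedge (ev Ap) (ev Bm))
             \<oplus>\<^sub>t (2 * a3) \<cdot>\<^sub>t wedge (ev Am) (ev M) \<oplus>\<^sub>t (4 * a4) \<cdot>\<^sub>t wedge (ev N) (ev M)
             \<ominus>\<^sub>t (2 * a5) \<cdot>\<^sub>t ((2::real) \<cdot>\<^sub>t wedge (ev N) (ev Ap) \<ominus>\<^sub>t wedge (ev Am) (ev Bp)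
                                  \<ominus>\<^sub>t wedge (ev Ap) (ev M))
             \<oplus>\<^sub>t (2 * c1) \<cdot>\<^sub>t wedge (ev Bm) (ev M)
        \<and> (schouten r = (\<lambda>i j k. 0) \<longleftrightarrow> a1 * b3 - c1 ^ 2 = 0)
        \<and> (\<forall>X. ad3 X (schouten r) = (\<lambda>i j k. 0))"
    unfolding Let_def using ad2_Ap ad2_M eN eAm eBp eBm e1 e2 by blast
qed

theorem mainTheorem2:
  shows "(\<forall>\<delta>. (lie_bialgebra \<delta> \<and> \<delta> (ev Ap) = (\<lambda>i j. 0)) \<longleftrightarrow>
            (\<exists>a1 a3 a4 a5 b3 c1. a1 * a4 + a5 * c1 = 0 \<and>
               (\<forall>X. \<delta> X = ad2 X (rmat a1 a3 a4 a5 b3 c1))))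
   \<and> (\<forall>a1 a3 a4 a5 b3 c1. a1 * a4 + a5 * c1 = 0 \<longrightarrow>
        (let r = rmat a1 a3 a4 a5 b3 c1 in
          ad2 (ev Ap) r = (\<lambda>i j. 0) \<and> ad2 (ev M) r = (\<lambda>i j. 0)
        \<and> ad2 (ev N) r = a1 \<cdot>\<^sub>t wedge (ev N) (ev Ap) \<oplus>\<^sub>t a3 \<cdot>\<^sub>t wedge (ev Ap) (ev M)
             \<oplus>\<^sub>t (2 * a4) \<cdot>\<^sub>t wedge (ev Bp) (ev M) \<oplus>\<^sub>t (3 * a5) \<cdot>\<^sub>t wedge (ev Ap) (ev Bp)
             \<ominus>\<^sub>t b3 \<cdot>\<^sub>t wedge (ev Am) (ev M)
        \<and> ad2 (ev Am) r = a1 \<cdot>\<^sub>t (wedge (ev N) (ev M) \<ominus>\<^sub>t wedge (ev Ap) (ev Am))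
             \<oplus>\<^sub>t (2 * a4) \<cdot>\<^sub>t wedge (ev Ap) (ev M) \<ominus>\<^sub>t a5 \<cdot>\<^sub>t wedge (ev Bp) (ev M)
             \<oplus>\<^sub>t (2 * c1) \<cdot>\<^sub>t wedge (ev Am) (ev M)
        \<and> ad2 (ev Bp) r = (2 * a1) \<cdot>\<^sub>t wedge (ev Ap) (ev Bp) \<ominus>\<^sub>t (2 * b3) \<cdot>\<^sub>t wedge (ev Ap) (ev M)
             \<ominus>\<^sub>t (2 * c1) \<cdot>\<^sub>t wedge (ev Bp) (ev M)
        \<and> ad2 (ev Bm) r = (2 * a1) \<cdot>\<^sub>t (wedge (ev N) (ev Am) \<ominus>\<^sub>t wedge (ev Ap) (ev Bm))
             \<oplus>\<^sub>t (2 * a3) \<cdot>\<^sub>t wedge (ev Am) (ev M) \<oplus>\<^sub>t (4 * a4) \<cdot>\<^sub>t wedge (ev N) (ev M)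
             \<ominus>\<^sub>t (2 * a5) \<cdot>\<^sub>t ((2::real) \<cdot>\<^sub>t wedge (ev N) (ev Ap) \<ominus>\<^sub>t wedge (ev Am) (ev Bp)
                                  \<ominus>\<^sub>t wedge (ev Ap) (ev M))
             \<oplus>\<^sub>t (2 * c1) \<cdot>\<^sub>t wedge (ev Bm) (ev M)
        \<and> (schouten r = (\<lambda>i j k. 0) \<longleftrightarrow> a1 * b3 - c1 ^ 2 = 0)
        \<and> (\<forall>X. ad3 X (schouten r) = (\<lambda>i j k. 0))))"
  by (rule conjI[OF partOne partTwo])

end
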